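(* Let $u(x)=\log\sum_{I\in\mathcal{I}}a_Ie^{I\cdot x}-\sum_{i=1}^n x_i$ (with $\mathcal{I}\subset\mathbb{N}^n$ finite containing all $I$ with $|I|\le1$, $a_I>0$ on $\mathcal{I}$, $a_I=1$ for $|I|\le1$) be a solution of $\det D^2u=e^{-u}$ on $\mathbb{R}^n$. Then the barycenter of the polytope $\mathcal{P}=\overline{Du(\mathbb{R}^n)}$ is the origin. *)

theory Defs
  imports "HOL-Analysis.Analysis"
begin

definition partial_deriv :: "(real^'n \<Rightarrow> real) \<Rightarrow> 'n \<Rightarrow> real^'n \<Rightarrow> real" where
  "partial_deriv f i x = deriv (\<lambda>t. f (x + t *\<^sub>R axis i 1)) 0"

definition grad :: "(real^'n \<Rightarrow> real) \<Rightarrow> real^'n \<Rightarrow> real^'n" where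
  "grad f x = (\<chi> i. partial_deriv f i x)"

definition hessian :: "(real^'n \<Rightarrow> real) \<Rightarrow> real^'n \<Rightarrow> real^'n^'n" where
  "hessian f x = (\<chi> i j. partial_deriv (\<lambda>y. partial_deriv f j y) i x)"

definition barycenter :: "(real^'n) set \<Rightarrow> real^'n" where
  "barycenter P = inverse (measure lebesgue P) *\<^sub>R integral P (\<lambda>y. y)"

end

theory Submission
  imports Defs "HOL-Combinatorics.Permutations" "HOL-Library.Numeral_Type" "HOL-Homology.Invariance_of_Domain"
begin


definition pext :: "('n \<Rightarrow> 'k) \<Rightarrow> ('n \<Rightarrow> 'n) \<Rightarrow> 'k \<Rightarrow> 'k" where
  "pext e q k = (if k \<in> range e then e (q (inv_into UNIV e k)) else k)"

lemma pext_id: "inj e \<Longrightarrow> pext e id = id"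
  by (auto simp: pext_def fun_eq_iff f_inv_into_f)

lemma pext_swap:
  assumes "inj e" shows "pext e (Transposition.transpose a b \<circ> q) = Transposition.transpose (e a) (e b) \<circ> pext e q"
  using assms by (auto simp: pext_def fun_eq_iff Transposition.transpose_def inj_eq)

lemma pext_permutes:
  assumes "inj e" "q permutes (UNIV::'n set)"
  shows "pext e q permutes (UNIV::'k set)"
proof -
  have "bij (pext e q)"
  proof (rule bij_betw_byWitness[where f'="pext e (inv_into UNIV q)"])
    show "\<forall>a\<in>UNIV. pext e (inv_into UNIV q) (pext e q a) = a" using assms
      by (auto simp: pext_def permutes_inverses f_inv_into_f)
    show "\<forall>a\<in>UNIV. pext e q (pext e (inv_into UNIV q) a) = a" using assms
      by (auto simp: pext_def permutes_inverses f_inv_into_f)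
  qed auto
  then show ?thesis by (simp add: permutes_def bij_iff)
qed

lemma sign_pext:
  fixes e :: "'n::finite \<Rightarrow> 'k::finite"
  assumes "inj e" "q permutes (UNIV::'n set)"
  shows "sign (pext e q) = sign q"
proof -
  have fin: "finite (UNIV::'n set)" by simp
  show ?thesis using assms(2) fin
proof (induction rule: permutes_induct)
  case id then show ?case using pext_id[OF assms(1)] by (metis sign_id)
next
  case (swap a b p)
  have "permutation (pext e p)" using pext_permutes[OF assms(1) \<open>p permutes UNIV\<close>] by (simp add: permutes_imp_permutation)
  moreover have "permutation p" using \<open>p permutes UNIV\<close> by (simp add: permutes_imp_permutation)
  moreover have "e a \<noteq> e b" using \<open>a \<noteq> b\<close> assms(1) by (simp add: inj_eq)
  ultimately show ?case using swap
    by (simp only: pext_swap[OF assms(1)] sign_compose permutation_swap_id sign_swap_id)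
qed
qed


definition blockM :: "('n::finite \<Rightarrow> 'k::finite) \<Rightarrow> real^'n^'n \<Rightarrow> real^'k^'k" where
  "blockM e D = (\<chi> k l. if k \<in> range e then (if l \<in> range e then D$(inv_into UNIV e k)$(inv_into UNIV e l) else 0)
                        else (if k = l then 1 else 0))"

lemma det_blockM:
  fixes e :: "'n::finite \<Rightarrow> 'k::finite"
  assumes e: "inj e"
  shows "det (blockM e D) = det D"
proof -
  let ?M = "blockM e D"
  let ?t = "\<lambda>p. of_int (sign p) * (\<Prod>k\<in>UNIV. ?M$k$(p k))"
  let ?P = "{p. p permutes (UNIV::'k set)}"
  let ?Q = "{q. q permutes (UNIV::'n set)}"
  have sub: "pext e ` ?Q \<subseteq> ?P" using pext_permutes[OF e] by auto
  have zero: "?t p = 0" if p: "p \<in> ?P - pext e ` ?Q" for p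
  proof (cases "\<forall>k. k \<notin> range e \<longrightarrow> p k = k")
    case True
    have pinj: "inj p" using p by (auto simp: permutes_inj)
    have inr: "p (e i) \<in> range e" for i
    proof (rule ccontr)
      assume "p (e i) \<notin> range e"
      then have "p (p (e i)) = p (e i)" using True by blast
      then have "p (e i) = e i" using pinj by (simp add: inj_eq)
      with \<open>p (e i) \<notin> range e\<close> show False by auto
    qed
    define q where "q = inv_into UNIV e \<circ> p \<circ> e"
    have "inj q" unfolding q_def using pinj e inr
      by (auto simp: inj_def) (metis f_inv_into_f)
    then have "bij q" using finite_UNIV_inj_surj[of q] by (simp add: bij_def)
    then have qp: "q permutes UNIV" by (simp add: permutes_def bij_iff)
    have "pext e q = p"
      using True inr e by (auto simp: pext_def q_def fun_eq_iff f_inv_into_f)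
    with qp p have False by auto
    then show ?thesis ..
  next
    case False
    then obtain k where k: "k \<notin> range e" "p k \<noteq> k" by blast
    then have "?M$k$(p k) = 0" by (simp add: blockM_def)
    then have "(\<Prod>k\<in>UNIV. ?M$k$(p k)) = 0" by (intro prod_zero) auto
    then show ?thesis by simp
  qed
  have "det ?M = sum ?t ?P" by (simp add: det_def)
  also have "\<dots> = sum ?t (pext e ` ?Q)"
    using zero sub by (intro sum.mono_neutral_right) auto
  also have "\<dots> = sum (?t \<circ> pext e) ?Q"
  proof (rule sum.reindex)
    show "inj_on (pext e) ?Q"
    proof (rule inj_onI)
      fix q1 q2 assume "q1 \<in> ?Q" "q2 \<in> ?Q" "pext e q1 = pext e q2"
      then have "e (q1 i) = e (q2 i)" for i
        by (metis (mono_tags) pext_def e inv_f_f rangeI)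
      then show "q1 = q2" using e by (auto simp: inj_eq fun_eq_iff)
    qed
  qed
  also have "\<dots> = sum (\<lambda>q. of_int (sign q) * (\<Prod>i\<in>UNIV. D$i$(q i))) ?Q"
  proof (rule sum.cong)
    fix q assume q: "q \<in> ?Q"
    have "(\<Prod>k\<in>UNIV. ?M$k$(pext e q k)) = (\<Prod>k\<in>range e. ?M$k$(pext e q k)) * (\<Prod>k\<in>-range e. ?M$k$(pext e q k))"
      by (subst prod.union_disjoint[symmetric]) (auto simp: Compl_partition)
    also have "(\<Prod>k\<in>-range e. ?M$k$(pext e q k)) = 1"
      by (intro prod.neutral) (auto simp: blockM_def pext_def)
    also have "(\<Prod>k\<in>range e. ?M$k$(pext e q k)) = (\<Prod>i\<in>UNIV. ?M$(e i)$(pext e q (e i)))"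
      using prod.reindex[of e UNIV "\<lambda>k. ?M$k$(pext e q k)"] e by (simp add: comp_def)
    also have "\<dots> = (\<Prod>i\<in>UNIV. D$i$(q i))"
      using e by (simp add: blockM_def pext_def)
    finally show "(?t \<circ> pext e) q = of_int (sign q) * (\<Prod>i\<in>UNIV. D$i$(q i))"
      using sign_pext[OF e] q by simp
  qed simp
  also have "\<dots> = det D" by (simp add: det_def)
  finally show ?thesis .
qed


definition proj :: "('n::finite \<Rightarrow> 'k::finite) \<Rightarrow> real^'k \<Rightarrow> real^'n" where
  "proj e z = (\<chi> i. z $ e i)"

definition Cyl :: "('n::finite \<Rightarrow> 'k::finite) \<Rightarrow> (real^'k) set" where
  "Cyl e = {z. \<forall>k. k \<notin> range e \<longrightarrow> 0 < z$k \<and> z$k < 1}"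

lemma prod_Basis_cart: "(\<Prod>b\<in>Basis. (x::real^'n) \<bullet> b) = (\<Prod>i\<in>UNIV. x$i)"
  by (simp add: Basis_vec_def cart_eq_inner_axis axis_eq_axis prod.UNION_disjoint)

lemma proj_linear: "bounded_linear (proj e)"
proof -
  have "linear (proj e)" by (auto simp: linear_iff proj_def vec_eq_iff)
  then show ?thesis by (simp add: linear_conv_bounded_linear)
qed

lemma proj_measurable[measurable]: "proj e \<in> borel_measurable borel"
  by (intro borel_measurable_continuous_onI linear_continuous_on proj_linear)

lemma Cyl_open: "open (Cyl e)"
proof -
  have "Cyl e = (\<Inter>k\<in>-range e. {z. 0 < z$k} \<inter> {z. z$k < 1})" by (auto simp: Cyl_def)
  moreover have "open {z::real^'k. 0 < z$k}" "open {z::real^'k. z$k < 1}" for k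
    by (auto intro!: open_Collect_less continuous_intros)
  ultimately show ?thesis by (auto intro!: open_INT open_Int)
qed

lemma Cyl_borel[measurable]: "Cyl e \<in> sets borel"
  by (rule borel_open[OF Cyl_open])

lemma nu_eq:
  fixes e :: "'n::finite \<Rightarrow> 'k::finite"
  assumes e: "inj e"
  shows "distr (density lborel (indicator (Cyl e))) borel (proj e) = (lborel :: (real^'n) measure)"
proof (rule lborel_eqI[symmetric])
  fix l u :: "real^'n"
  assume lu: "\<And>b. b \<in> Basis \<Longrightarrow> l \<bullet> b \<le> u \<bullet> b"
  have lui: "l$i \<le> u$i" for i using lu[of "axis i 1"] by (simp add: cart_eq_inner_axis)
  define l' :: "real^'k" where "l' = (\<chi> k. if k\<in>range e then l$(inv_into UNIV e k) else 0)"
  define u' :: "real^'k" where "u' = (\<chi> k. if k\<in>range e then u$(inv_into UNIV e k) else 1)"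
  have eq: "proj e -` box l u \<inter> Cyl e = box l' u'"
  proof (intro equalityI subsetI)
    fix z assume "z \<in> proj e -` box l u \<inter> Cyl e"
    then show "z \<in> box l' u'" using e
      by (auto simp: mem_box_cart proj_def Cyl_def l'_def u'_def f_inv_into_f)
  next
    fix z assume z: "z \<in> box l' u'"
    have "l$i < z$(e i) \<and> z$(e i) < u$i" for i
      using z[unfolded mem_box_cart, rule_format, of "e i"] e by (simp add: l'_def u'_def)
    moreover have "0 < z$k \<and> z$k < 1" if "k \<notin> range e" for k
      using z[unfolded mem_box_cart, rule_format, of k] that by (simp add: l'_def u'_def)
    ultimately show "z \<in> proj e -` box l u \<inter> Cyl e"
      by (auto simp: mem_box_cart proj_def Cyl_def)
  qed
  have "emeasure (distr (density lborel (indicator (Cyl e))) borel (proj e)) (box l u)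
      = emeasure (density lborel (indicator (Cyl e))) (proj e -` box l u)"
    by (subst emeasure_distr) auto
  also have "\<dots> = (\<integral>\<^sup>+ x. indicator (Cyl e) x * indicator (proj e -` box l u) x \<partial>lborel)"
    using measurable_sets[OF proj_measurable[of e], of "box l u"] by (subst emeasure_density) auto
  also have "\<dots> = (\<integral>\<^sup>+ x. indicator (proj e -` box l u \<inter> Cyl e) x \<partial>lborel)"
    by (intro nn_integral_cong) (auto split: split_indicator)
  also have "\<dots> = emeasure lborel (box l' u')"
    by (subst eq, subst nn_integral_indicator) auto
  also have "\<dots> = (\<Prod>k\<in>UNIV. (u' - l')$k)"
  proof -
    have le: "l'$k \<le> u'$k" for k using lui by (simp add: l'_def u'_def)
    have lu': "l' \<bullet> b \<le> u' \<bullet> b" if bB: "b \<in> Basis" for b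
    proof -
      obtain k where "b = axis k 1" using bB by (auto simp: Basis_vec_def)
      then show ?thesis using le[of k] by (simp add: cart_eq_inner_axis[symmetric])
    qed
    have "emeasure lborel (box l' u') = ennreal (\<Prod>b\<in>Basis. (u' - l') \<bullet> b)"
      by (rule emeasure_lborel_box[OF lu'])
    then show ?thesis by (simp only: prod_Basis_cart)
  qed
  also have "(\<Prod>k\<in>UNIV. (u' - l')$k) = (\<Prod>k\<in>range e. (u' - l')$k) * (\<Prod>k\<in>-range e. (u' - l')$k)"
    by (subst prod.union_disjoint[symmetric]) (auto simp: Compl_partition)
  also have "(\<Prod>k\<in>-range e. (u' - l')$k) = 1"
    by (intro prod.neutral) (auto simp: l'_def u'_def)
  also have "(\<Prod>k\<in>range e. (u' - l')$k) = (\<Prod>i\<in>UNIV. (u - l)$i)"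
    using prod.reindex[of e UNIV "\<lambda>k. (u' - l')$k"] e by (simp add: comp_def l'_def u'_def)
  finally show "emeasure (distr (density lborel (indicator (Cyl e))) borel (proj e)) (box l u) = (\<Prod>b\<in>Basis. (u - l) \<bullet> b)"
    by (simp add: prod_Basis_cart)
qed simp


lemma TR_aux:
  fixes e :: "'n::finite \<Rightarrow> 'k::finite" and H :: "real^'n \<Rightarrow> 'b::euclidean_space"
  assumes e: "inj e" and H[measurable]: "H \<in> borel_measurable borel"
  shows "(integrable lborel H \<longleftrightarrow> integrable lborel (\<lambda>z. indicator (Cyl e) z *\<^sub>R H (proj e z)))
     \<and> integral\<^sup>L lborel H = integral\<^sup>L lborel (\<lambda>z. indicator (Cyl e) z *\<^sub>R H (proj e z))"
proof -
  let ?D = "density lborel (indicator (Cyl e) :: real^'k \<Rightarrow> ennreal)"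
  have D: "?D = density lborel (\<lambda>z. ennreal (indicator (Cyl e) z))"
    by (intro density_cong) (auto split: split_indicator)
  have m: "proj e \<in> measurable ?D borel" by simp
  have "integrable lborel H \<longleftrightarrow> integrable (distr ?D borel (proj e)) H" by (simp add: nu_eq[OF e])
  also have "\<dots> \<longleftrightarrow> integrable ?D (\<lambda>z. H (proj e z))" by (rule integrable_distr_eq[OF m H])
  also have "\<dots> \<longleftrightarrow> integrable lborel (\<lambda>z. indicator (Cyl e) z *\<^sub>R H (proj e z))"
    unfolding D by (subst integrable_density) auto
  finally have 1: "integrable lborel H \<longleftrightarrow> integrable lborel (\<lambda>z. indicator (Cyl e) z *\<^sub>R H (proj e z))" .
  have "integral\<^sup>L lborel H = integral\<^sup>L (distr ?D borel (proj e)) H" by (simp add: nu_eq[OF e])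
  also have "\<dots> = integral\<^sup>L ?D (\<lambda>z. H (proj e z))" by (rule integral_distr[OF m H])
  also have "\<dots> = integral\<^sup>L lborel (\<lambda>z. indicator (Cyl e) z *\<^sub>R H (proj e z))"
    unfolding D by (subst integral_density) auto
  finally show ?thesis using 1 by simp
qed

lemma TR:
  fixes e :: "'n::finite \<Rightarrow> 'k::finite" and h :: "real^'n \<Rightarrow> 'b::euclidean_space"
  assumes e: "inj e" and h[measurable]: "h \<in> borel_measurable borel" and T[measurable]: "T \<in> sets borel"
  shows "h absolutely_integrable_on T \<longleftrightarrow> (\<lambda>z. h (proj e z)) absolutely_integrable_on (proj e -` T \<inter> Cyl e)"
    and "h absolutely_integrable_on T \<Longrightarrow> integral T h = integral (proj e -` T \<inter> Cyl e) (\<lambda>z. h (proj e z))"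
proof -
  let ?H = "\<lambda>x. indicator T x *\<^sub>R h x"
  have Hm[measurable]: "?H \<in> borel_measurable borel" by simp
  have pm: "proj e -` T \<inter> Cyl e \<in> sets borel"
    using measurable_sets[OF proj_measurable[of e] T] by auto
  have eqf: "(\<lambda>z. indicator (Cyl e) z *\<^sub>R ?H (proj e z)) = (\<lambda>z. indicator (proj e -` T \<inter> Cyl e) z *\<^sub>R h (proj e z))"
    by (auto simp: fun_eq_iff split: split_indicator)
  have A: "h absolutely_integrable_on T \<longleftrightarrow> integrable lborel ?H"
    unfolding set_integrable_def by (subst integrable_completion) auto
  have B: "(\<lambda>z. h (proj e z)) absolutely_integrable_on (proj e -` T \<inter> Cyl e) \<longleftrightarrow>
      integrable lborel (\<lambda>z. indicator (Cyl e) z *\<^sub>R ?H (proj e z))"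
    unfolding set_integrable_def eqf using pm by (subst integrable_completion) auto
  show "h absolutely_integrable_on T \<longleftrightarrow> (\<lambda>z. h (proj e z)) absolutely_integrable_on (proj e -` T \<inter> Cyl e)"
    using A B TR_aux[OF e Hm] by blast
  assume ai: "h absolutely_integrable_on T"
  then have ai2: "(\<lambda>z. h (proj e z)) absolutely_integrable_on (proj e -` T \<inter> Cyl e)"
    using A B TR_aux[OF e Hm] by blast
  have "integral T h = (LINT x:T | lebesgue. h x)" using set_lebesgue_integral_eq_integral(2)[OF ai] by simp
  also have "\<dots> = integral\<^sup>L lborel ?H"
    unfolding set_lebesgue_integral_def by (subst integral_completion) auto
  also have "\<dots> = integral\<^sup>L lborel (\<lambda>z. indicator (Cyl e) z *\<^sub>R ?H (proj e z))"
    using TR_aux[OF e Hm] by blast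
  also have "\<dots> = (LINT z:(proj e -` T \<inter> Cyl e) | lebesgue. h (proj e z))"
    unfolding set_lebesgue_integral_def eqf using pm by (subst integral_completion) auto
  also have "\<dots> = integral (proj e -` T \<inter> Cyl e) (\<lambda>z. h (proj e z))"
    using set_lebesgue_integral_eq_integral(2)[OF ai2] by simp
  finally show "integral T h = integral (proj e -` T \<inter> Cyl e) (\<lambda>z. h (proj e z))" .
qed


definition liftA :: "('n::finite \<Rightarrow> 'k::finite) \<Rightarrow> real^'n \<Rightarrow> real^'k" where
  "liftA e x = (\<chi> k. if k \<in> range e then x $ inv_into UNIV e k else 0)"
definition liftB :: "('n::finite \<Rightarrow> 'k::finite) \<Rightarrow> real^'k \<Rightarrow> real^'k" where
  "liftB e z = (\<chi> k. if k \<in> range e then 0 else z $ k)"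

lemma liftA_linear: "bounded_linear (liftA e)"
proof -
  have "linear (liftA e)" by (auto simp: linear_iff liftA_def vec_eq_iff)
  then show ?thesis by (simp add: linear_conv_bounded_linear)
qed
lemma liftB_linear: "bounded_linear (liftB e)"
proof -
  have "linear (liftB e)" by (auto simp: linear_iff liftB_def vec_eq_iff)
  then show ?thesis by (simp add: linear_conv_bounded_linear)
qed

lemma proj_liftA: "inj e \<Longrightarrow> proj e (liftA e x) = x"
  by (simp add: proj_def liftA_def vec_eq_iff)
lemma proj_liftB: "proj e (liftB e z) = 0"
  by (simp add: proj_def liftB_def vec_eq_iff)

lemma CoV_n:
  fixes e :: "'n::finite \<Rightarrow> 'k::{finite,wellorder}" and g :: "real^'n \<Rightarrow> real^'n"
    and f :: "real^'n \<Rightarrow> real^'m::finite"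
  assumes e: "inj e"
    and der: "\<And>x. (g has_derivative g' x) (at x)"
    and ginj: "inj g"
    and contJ: "continuous_on UNIV (\<lambda>x. det (matrix (g' x)))"
    and contg: "continuous_on UNIV g" and contf: "continuous_on UNIV f"
    and op: "open (range g)"
  shows "(\<lambda>x. \<bar>det (matrix (g' x))\<bar> *\<^sub>R f (g x)) absolutely_integrable_on UNIV \<and>
           integral UNIV (\<lambda>x. \<bar>det (matrix (g' x))\<bar> *\<^sub>R f (g x)) = b
     \<longleftrightarrow> f absolutely_integrable_on range g \<and> integral (range g) f = b"
proof -
  define G where "G z = liftA e (g (proj e z)) + liftB e z" for z
  define G' where "G' z v = liftA e (g' (proj e z) (proj e v)) + liftB e v" for z v
  have lin: "linear (g' x)" for x using der[of x] has_derivative_linear by blast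
  have derG: "(G has_derivative G' z) (at z within Cyl e)" for z
  proof -
    have "((\<lambda>z. g (proj e z)) has_derivative (\<lambda>v. g' (proj e z) (proj e v))) (at z)"
      using has_derivative_compose[OF bounded_linear_imp_has_derivative[OF proj_linear[of e]] der, of z UNIV]
      by (simp add: comp_def)
    then have "((\<lambda>z. liftA e (g (proj e z))) has_derivative (\<lambda>v. liftA e (g' (proj e z) (proj e v)))) (at z)"
      using bounded_linear.has_derivative[OF liftA_linear] by blast
    then have "(G has_derivative G' z) (at z)"
      unfolding G_def G'_def
      by (intro has_derivative_add bounded_linear_imp_has_derivative[OF liftB_linear])
    then show ?thesis by (rule has_derivative_at_withinI)
  qed
  have matG: "matrix (G' z) = blockM e (matrix (g' (proj e z)))" for z
  proof -
    have pa: "proj e (axis l 1) = (if l \<in> range e then axis (inv_into UNIV e l) 1 else 0)" for l :: 'k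
      using e by (auto simp: proj_def vec_eq_iff axis_def inj_eq)
    show ?thesis
      using e linear_0[OF lin] unfolding matrix_def G'_def pa
      by (auto simp: blockM_def vec_eq_iff liftA_def liftB_def axis_def)
  qed
  have ginj': "g x = g y \<longleftrightarrow> x = y" for x y using ginj by (auto simp: inj_eq)
  have injG: "inj_on G (Cyl e)"
  proof (rule inj_onI)
    fix z1 z2 assume "z1 \<in> Cyl e" "z2 \<in> Cyl e" "G z1 = G z2"
    then have eq: "G z1 $ k = G z2 $ k" for k by simp
    have "proj e (G z) = g (proj e z)" for z
      by (simp add: G_def proj_liftA[OF e] proj_liftB linear_add[OF bounded_linear.linear[OF proj_linear]])
    then have "g (proj e z1) = g (proj e z2)" using \<open>G z1 = G z2\<close> by metis
    then have pe: "proj e z1 = proj e z2" using ginj' by blast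
    show "z1 = z2"
    proof (rule vec_eq_iff[THEN iffD2], rule allI)
      fix k show "z1 $ k = z2 $ k"
      proof (cases "k \<in> range e")
        case True then obtain i where "k = e i" by auto
        then show ?thesis using pe by (simp add: proj_def vec_eq_iff)
      next
        case False then show ?thesis using eq[of k] by (simp add: G_def liftA_def liftB_def)
      qed
    qed
  qed
  have projG: "proj e (G z) = g (proj e z)" for z
    by (simp add: G_def proj_liftA[OF e] proj_liftB linear_add[OF bounded_linear.linear[OF proj_linear]])
  have imG: "G ` Cyl e = proj e -` range g \<inter> Cyl e"
  proof (intro equalityI subsetI)
    fix w assume "w \<in> G ` Cyl e"
    then obtain z where z: "z \<in> Cyl e" "w = G z" by auto
    then show "w \<in> proj e -` range g \<inter> Cyl e"
      using projG[of z] by (auto simp: Cyl_def G_def liftA_def liftB_def)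
  next
    fix w assume w: "w \<in> proj e -` range g \<inter> Cyl e"
    then obtain x where x: "proj e w = g x" by auto
    define z where "z = liftA e x + liftB e w"
    have "z \<in> Cyl e" using w by (auto simp: Cyl_def z_def liftA_def liftB_def)
    moreover have "proj e z = x"
      by (simp add: z_def proj_liftA[OF e] proj_liftB linear_add[OF bounded_linear.linear[OF proj_linear]])
    moreover have "G z = w"
    proof -
      have "G z = liftA e (proj e w) + liftB e w"
      proof -
        have lb: "liftB e z = liftB e w" by (simp add: z_def liftA_def liftB_def vec_eq_iff)
        show ?thesis unfolding G_def lb \<open>proj e z = x\<close> x ..
      qed
      also have "\<dots> = w" using e by (auto simp: liftA_def liftB_def proj_def vec_eq_iff f_inv_into_f)
      finally show ?thesis .
    qed
    ultimately show "w \<in> G ` Cyl e" by blast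
  qed
  have S: "Cyl e \<in> sets lebesgue" using Cyl_borel by auto
  note cov = has_absolute_integral_change_of_variables[OF S derG injG, of "\<lambda>z. f (proj e z)" b]
  have eq1: "(\<lambda>z. \<bar>det (matrix (G' z))\<bar> *\<^sub>R f (proj e (G z))) = (\<lambda>z. (\<lambda>x. \<bar>det (matrix (g' x))\<bar> *\<^sub>R f (g x)) (proj e z))"
    by (simp add: matG det_blockM[OF e] projG)
  have hm: "(\<lambda>x. \<bar>det (matrix (g' x))\<bar> *\<^sub>R f (g x)) \<in> borel_measurable borel"
    by (intro borel_measurable_continuous_onI continuous_intros contJ continuous_on_compose2[OF contf contg]) auto
  have fm: "f \<in> borel_measurable borel"
    by (intro borel_measurable_continuous_onI contf)
  have rg: "range g \<in> sets borel" using op by (simp add: borel_open)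
  have pU: "proj e -` UNIV \<inter> Cyl e = Cyl e" by simp
  show ?thesis
    using cov TR[OF e hm, of UNIV] TR[OF e fm rg] unfolding eq1 imG pU by auto
qed


lemma partial_deriv_of_has_derivative:
  fixes f :: "real^'n \<Rightarrow> real"
  assumes "(f has_derivative f') (at x)"
  shows "partial_deriv f i x = f' (axis i 1)"
proof -
  have lin: "linear f'" using assms has_derivative_linear by blast
  have "((\<lambda>t. x + t *\<^sub>R axis i 1) has_derivative (\<lambda>t. t *\<^sub>R axis i 1)) (at 0)"
    by (auto intro!: derivative_eq_intros)
  moreover have "(f has_derivative f') (at (x + 0 *\<^sub>R axis i 1))" using assms by simp
  ultimately have "((\<lambda>t. f (x + t *\<^sub>R axis i 1)) has_derivative (\<lambda>t. f' (t *\<^sub>R axis i 1))) (at 0)"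
    using has_derivative_compose[of "\<lambda>t. x + t *\<^sub>R axis i 1" _ 0 UNIV f f'] by (simp add: comp_def)
  moreover have "(\<lambda>t. f' (t *\<^sub>R axis i 1)) = (\<lambda>t. f' (axis i 1) * t)"
    using linear_scale[OF lin] by (auto simp: mult.commute)
  ultimately have "((\<lambda>t. f (x + t *\<^sub>R axis i 1)) has_field_derivative f' (axis i 1)) (at 0)"
    by (simp add: has_field_derivative_def)
  then show ?thesis unfolding partial_deriv_def by (rule DERIV_imp_deriv)
qed

locale toric =
  fixes II :: "(nat^'n::finite) set" and a :: "nat^'n \<Rightarrow> real"
  assumes fin: "finite II"
    and small: "{I. (\<Sum>i\<in>UNIV. I$i) \<le> 1} \<subseteq> II"
    and apos: "\<And>I. I \<in> II \<Longrightarrow> a I > 0"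
    and aone: "\<And>I. (\<Sum>i\<in>UNIV. I$i) \<le> 1 \<Longrightarrow> a I = 1"
begin

definition LI :: "nat^'n \<Rightarrow> real^'n \<Rightarrow> real" where "LI I x = (\<Sum>i\<in>UNIV. real (I$i) * x$i)"
definition Sc :: "(nat^'n \<Rightarrow> real) \<Rightarrow> real^'n \<Rightarrow> real" where
  "Sc c x = (\<Sum>I\<in>II. a I * c I * exp (LI I x))"
definition FF :: "real^'n \<Rightarrow> real" where "FF = Sc (\<lambda>_. 1)"
definition NN :: "'n \<Rightarrow> real^'n \<Rightarrow> real" where "NN j = Sc (\<lambda>I. real (I$j))"
definition MM :: "'n \<Rightarrow> 'n \<Rightarrow> real^'n \<Rightarrow> real" where "MM i j = Sc (\<lambda>I. real (I$j) * real (I$i))"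
definition uu :: "real^'n \<Rightarrow> real" where "uu x = ln (FF x) - (\<Sum>i\<in>UNIV. x$i)"
definition GG :: "'n \<Rightarrow> real^'n \<Rightarrow> real" where "GG j x = NN j x / FF x - 1"
definition HH :: "'n \<Rightarrow> 'n \<Rightarrow> real^'n \<Rightarrow> real" where
  "HH i j x = (MM i j x * FF x - NN j x * NN i x) / (FF x)^2"
definition gg :: "real^'n \<Rightarrow> real^'n" where "gg x = (\<chi> j. GG j x)"

lemma LI_linear: "bounded_linear (LI I)"
proof -
  have "linear (LI I)" by (auto simp: linear_iff LI_def sum.distrib algebra_simps sum_distrib_left)
  then show ?thesis by (simp add: linear_conv_bounded_linear)
qed

lemma exp_LI_deriv: "((\<lambda>x. exp (LI I x)) has_derivative (\<lambda>h. exp (LI I x) * LI I h)) (at x)"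
  proof -
  have "((\<lambda>x. exp (LI I x)) has_derivative (\<lambda>h. exp (LI I x) * LI I h)) (at x)"
    using has_derivative_compose[OF bounded_linear_imp_has_derivative[OF LI_linear[of I]]
      DERIV_exp[THEN has_field_derivative_imp_has_derivative], of x UNIV] by (simp add: comp_def mult.commute)
  then show ?thesis .
qed

lemma Sc_deriv: "(Sc c has_derivative (\<lambda>h. \<Sum>i\<in>UNIV. h$i * Sc (\<lambda>I. c I * real (I$i)) x)) (at x)"
proof -
  have "(Sc c has_derivative (\<lambda>h. \<Sum>I\<in>II. a I * c I * (exp (LI I x) * LI I h))) (at x)"
    unfolding Sc_def
    by (intro has_derivative_sum has_derivative_mult_right exp_LI_deriv)
  moreover have "(\<Sum>I\<in>II. a I * c I * (exp (LI I x) * LI I h)) = (\<Sum>i\<in>UNIV. h$i * Sc (\<lambda>I. c I * real (I$i)) x)" for h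
  proof -
    have "(\<Sum>I\<in>II. a I * c I * (exp (LI I x) * LI I h)) = (\<Sum>I\<in>II. \<Sum>i\<in>UNIV. h$i * (a I * (c I * real (I$i)) * exp (LI I x)))"
    proof (intro sum.cong refl)
      fix I
      have "a I * c I * (exp (LI I x) * LI I h) = (a I * c I * exp (LI I x)) * (\<Sum>i\<in>UNIV. real (I$i) * h$i)"
        by (simp add: LI_def)
      also have "\<dots> = (\<Sum>i\<in>UNIV. (a I * c I * exp (LI I x)) * (real (I$i) * h$i))"
        by (rule sum_distrib_left)
      also have "\<dots> = (\<Sum>i\<in>UNIV. h$i * (a I * (c I * real (I$i)) * exp (LI I x)))"
        by (intro sum.cong refl) (simp add: mult_ac)
      finally show "a I * c I * (exp (LI I x) * LI I h) = (\<Sum>i\<in>UNIV. h$i * (a I * (c I * real (I$i)) * exp (LI I x)))" .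
    qed
    also have "\<dots> = (\<Sum>i\<in>UNIV. \<Sum>I\<in>II. h$i * (a I * (c I * real (I$i)) * exp (LI I x)))"
      by (rule sum.swap)
    also have "\<dots> = (\<Sum>i\<in>UNIV. h$i * Sc (\<lambda>I. c I * real (I$i)) x)"
      by (simp add: Sc_def sum_distrib_left)
    finally show ?thesis .
  qed
  ultimately show ?thesis by simp
qed

end


lemma vec_has_derivative:
  fixes f :: "'a::real_normed_vector \<Rightarrow> real^'n"
  assumes "\<And>j. ((\<lambda>x. f x $ j) has_derivative (\<lambda>h. f' h $ j)) (at a)"
  shows "(f has_derivative f') (at a)"
proof -
  have "((\<lambda>x. f x \<bullet> i) has_derivative (\<lambda>x. f' x \<bullet> i)) (at a)" if iB: "i \<in> Basis" for i
  proof -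
    obtain j where "i = axis j 1" using iB by (auto simp: Basis_vec_def Basis_real_def)
    then show ?thesis using assms[of j] by (simp add: cart_eq_inner_axis[symmetric])
  qed
  then show ?thesis using has_derivative_componentwise_within[of f f' a UNIV] by simp
qed

lemma sum_axis_mult: "(\<Sum>i\<in>UNIV. (axis j 1::real^'n) $ i * f i) = f j"
proof -
  have "(\<lambda>i. (axis j 1::real^'n) $ i * f i) = (\<lambda>i. if i = j then f i else 0)"
    by (auto simp: axis_def fun_eq_iff)
  then show ?thesis by (simp only:) simp
qed

context toric begin

lemma zero_in: "0 \<in> II" using small by auto
lemma axis_in: "axis k 1 \<in> II"
proof -
  have "(\<Sum>i\<in>UNIV. (axis k 1 :: nat^'n) $ i) = 1"
    by (simp add: axis_def)
  then show ?thesis using small by auto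
qed

lemma FF_pos: "FF x > 0"
  unfolding FF_def Sc_def using fin zero_in apos
  by (intro sum_pos) auto

lemma FF_deriv: "(FF has_derivative (\<lambda>h. \<Sum>i\<in>UNIV. h$i * NN i x)) (at x)"
  using Sc_deriv[of "\<lambda>_. 1" x] by (simp add: FF_def NN_def)

lemma NN_deriv: "(NN j has_derivative (\<lambda>h. \<Sum>i\<in>UNIV. h$i * MM i j x)) (at x)"
  using Sc_deriv[of "\<lambda>I. real (I$j)" x] by (simp add: NN_def MM_def)

lemma uu_deriv: "(uu has_derivative (\<lambda>h. \<Sum>i\<in>UNIV. h$i * GG i x)) (at x)"
proof -
  have l: "((\<lambda>x. ln (FF x)) has_derivative (\<lambda>h. (\<Sum>i\<in>UNIV. h$i * NN i x) / FF x)) (at x)"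
    using has_derivative_compose[OF FF_deriv DERIV_ln_divide[OF FF_pos[of x], THEN has_field_derivative_imp_has_derivative]]
    by (simp add: comp_def)
  have s: "((\<lambda>x::real^'n. \<Sum>i\<in>UNIV. x$i) has_derivative (\<lambda>h. \<Sum>i\<in>UNIV. h$i)) (at x)"
    by (intro has_derivative_sum bounded_linear_imp_has_derivative bounded_linear_vec_nth)
  have "(uu has_derivative (\<lambda>h. (\<Sum>i\<in>UNIV. h$i * NN i x) / FF x - (\<Sum>i\<in>UNIV. h$i))) (at x)"
    unfolding uu_def by (intro has_derivative_diff l s)
  moreover have "(\<lambda>h. (\<Sum>i\<in>UNIV. h$i * NN i x) / FF x - (\<Sum>i\<in>UNIV. h$i)) = (\<lambda>h. \<Sum>i\<in>UNIV. h$i * GG i x)"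
    by (auto simp: fun_eq_iff GG_def sum_divide_distrib sum_subtractf[symmetric] algebra_simps)
  ultimately show ?thesis by simp
qed

lemma GG_deriv: "(GG j has_derivative (\<lambda>h. \<Sum>i\<in>UNIV. h$i * HH i j x)) (at x)"
proof -
  have F0: "FF x \<noteq> 0" using FF_pos[of x] by simp
  have "(GG j has_derivative (\<lambda>h. ((\<Sum>i\<in>UNIV. h$i * MM i j x) * FF x - NN j x * (\<Sum>i\<in>UNIV. h$i * NN i x)) / (FF x * FF x))) (at x)"
    unfolding GG_def
    by (rule has_derivative_eq_rhs, rule has_derivative_diff[OF has_derivative_divide[OF NN_deriv FF_deriv F0] has_derivative_const])
       (auto simp: fun_eq_iff field_simps F0 power2_eq_square)
  moreover have "(\<lambda>h. ((\<Sum>i\<in>UNIV. h$i * MM i j x) * FF x - NN j x * (\<Sum>i\<in>UNIV. h$i * NN i x)) / (FF x * FF x)) = (\<lambda>h. \<Sum>i\<in>UNIV. h$i * HH i j x)"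
    by (auto simp: fun_eq_iff HH_def power2_eq_square sum_divide_distrib sum_distrib_left sum_distrib_right
        sum_subtractf[symmetric] diff_divide_distrib intro!: sum.cong) (simp add: algebra_simps)
  ultimately show ?thesis by simp
qed

lemma gg_deriv: "(gg has_derivative (\<lambda>h. \<chi> j. \<Sum>i\<in>UNIV. h$i * HH i j x)) (at x)"
  by (rule vec_has_derivative) (simp add: gg_def GG_deriv)

lemma partial_uu: "partial_deriv uu j x = GG j x"
  using partial_deriv_of_has_derivative[OF uu_deriv[of x], of j] by (simp add: sum_axis_mult)

lemma grad_uu: "grad uu = gg"
  by (simp add: fun_eq_iff grad_def gg_def partial_uu)

lemma hessian_uu: "hessian uu x = (\<chi> i j. HH i j x)"
proof -
  have "(\<lambda>y. partial_deriv uu j y) = GG j" for j by (simp add: fun_eq_iff partial_uu)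
  moreover have "partial_deriv (GG j) i x = HH i j x" for i j
    using partial_deriv_of_has_derivative[OF GG_deriv[of j x], of i] by (simp add: sum_axis_mult)
  ultimately show ?thesis by (simp add: hessian_def)
qed

lemma HH_sym: "HH i j x = HH j i x"
  by (simp add: HH_def MM_def mult.commute)

lemma matrix_gg': "matrix (\<lambda>h. \<chi> j. \<Sum>i\<in>UNIV. h$i * HH i j x) = hessian uu x"
  by (simp add: matrix_def hessian_uu vec_eq_iff sum_axis_mult HH_sym)

end


lemma var_identity:
  fixes w s :: "'a \<Rightarrow> real"
  shows "2 * ((\<Sum>I\<in>A. w I) * (\<Sum>I\<in>A. w I * (s I)^2) - (\<Sum>I\<in>A. w I * s I)^2)
       = (\<Sum>I\<in>A. \<Sum>J\<in>A. w I * w J * (s I - s J)^2)"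
proof -
  have "(\<Sum>I\<in>A. \<Sum>J\<in>A. w I * w J * (s I - s J)^2)
     = (\<Sum>I\<in>A. \<Sum>J\<in>A. (w I * (s I)^2) * w J + w I * (w J * (s J)^2) - 2 * ((w I * s I) * (w J * s J)))"
    by (intro sum.cong refl) (simp add: power2_eq_square algebra_simps)
  also have "\<dots> = (\<Sum>I\<in>A. \<Sum>J\<in>A. (w I * (s I)^2) * w J) + (\<Sum>I\<in>A. \<Sum>J\<in>A. w I * (w J * (s J)^2))
       - (\<Sum>I\<in>A. \<Sum>J\<in>A. 2 * ((w I * s I) * (w J * s J)))"
    by (simp add: sum.distrib sum_subtractf)
  also have "\<dots> = (\<Sum>I\<in>A. w I * (s I)^2) * (\<Sum>J\<in>A. w J) + (\<Sum>I\<in>A. w I) * (\<Sum>J\<in>A. w J * (s J)^2)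
       - 2 * ((\<Sum>I\<in>A. w I * s I) * (\<Sum>J\<in>A. w J * s J))"
  proof -
    have 1: "(\<Sum>I\<in>A. \<Sum>J\<in>A. (w I * (s I)^2) * w J) = (\<Sum>I\<in>A. w I * (s I)^2) * (\<Sum>J\<in>A. w J)"
      by (rule sum_product[symmetric])
    have 2: "(\<Sum>I\<in>A. \<Sum>J\<in>A. w I * (w J * (s J)^2)) = (\<Sum>I\<in>A. w I) * (\<Sum>J\<in>A. w J * (s J)^2)"
      by (rule sum_product[symmetric])
    have 3: "(\<Sum>I\<in>A. \<Sum>J\<in>A. 2 * ((w I * s I) * (w J * s J))) = 2 * ((\<Sum>I\<in>A. w I * s I) * (\<Sum>J\<in>A. w J * s J))"
    proof -
      have "(\<Sum>I\<in>A. w I * s I) * (\<Sum>J\<in>A. w J * s J) = (\<Sum>I\<in>A. \<Sum>J\<in>A. (w I * s I) * (w J * s J))"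
        by (rule sum_product)
      then show ?thesis by (simp add: sum_distrib_left)
    qed
    show ?thesis by (simp only: 1 2 3)
  qed
  finally show ?thesis by (simp add: power2_eq_square algebra_simps)
qed

context toric begin

definition ww :: "real^'n \<Rightarrow> nat^'n \<Rightarrow> real" where "ww x I = a I * exp (LI I x)"

lemma ww_pos: "I \<in> II \<Longrightarrow> ww x I > 0" using apos by (simp add: ww_def)

lemma FF_ww: "FF x = (\<Sum>I\<in>II. ww x I)" by (simp add: FF_def Sc_def ww_def)

lemma lin_N: "(\<Sum>i\<in>UNIV. v$i * NN i x) = (\<Sum>I\<in>II. ww x I * LI I v)"
proof -
  have "(\<Sum>i\<in>UNIV. v$i * NN i x) = (\<Sum>i\<in>UNIV. \<Sum>I\<in>II. ww x I * (real (I$i) * v$i))"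
    by (simp add: NN_def Sc_def ww_def sum_distrib_left mult_ac)
  also have "\<dots> = (\<Sum>I\<in>II. \<Sum>i\<in>UNIV. ww x I * (real (I$i) * v$i))" by (rule sum.swap)
  also have "\<dots> = (\<Sum>I\<in>II. ww x I * LI I v)" by (simp add: LI_def sum_distrib_left)
  finally show ?thesis .
qed

lemma quad_M: "(\<Sum>j\<in>UNIV. v$j * (\<Sum>i\<in>UNIV. v$i * MM i j x)) = (\<Sum>I\<in>II. ww x I * (LI I v)^2)"
proof -
  have "(\<Sum>j\<in>UNIV. v$j * (\<Sum>i\<in>UNIV. v$i * MM i j x))
      = (\<Sum>j\<in>UNIV. \<Sum>i\<in>UNIV. \<Sum>I\<in>II. ww x I * ((real (I$i) * v$i) * (real (I$j) * v$j)))"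
    by (simp add: MM_def Sc_def ww_def sum_distrib_left mult_ac)
  also have "\<dots> = (\<Sum>j\<in>UNIV. \<Sum>I\<in>II. \<Sum>i\<in>UNIV. ww x I * ((real (I$i) * v$i) * (real (I$j) * v$j)))"
    by (intro sum.cong refl sum.swap)
  also have "\<dots> = (\<Sum>I\<in>II. \<Sum>j\<in>UNIV. \<Sum>i\<in>UNIV. ww x I * ((real (I$i) * v$i) * (real (I$j) * v$j)))"
    by (rule sum.swap)
  also have "\<dots> = (\<Sum>I\<in>II. ww x I * (LI I v)^2)"
    by (simp add: LI_def power2_eq_square sum_product sum_distrib_left mult_ac)
  finally show ?thesis .
qed

lemma quad_H: "(\<Sum>j\<in>UNIV. v$j * (\<Sum>i\<in>UNIV. v$i * HH i j x)) =
   ((\<Sum>I\<in>II. ww x I) * (\<Sum>I\<in>II. ww x I * (LI I v)^2) - (\<Sum>I\<in>II. ww x I * LI I v)^2) / (FF x)^2"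
proof -
  have "(\<Sum>j\<in>UNIV. v$j * (\<Sum>i\<in>UNIV. v$i * HH i j x)) =
     ((\<Sum>j\<in>UNIV. v$j * (\<Sum>i\<in>UNIV. v$i * MM i j x)) * FF x - (\<Sum>i\<in>UNIV. v$i * NN i x) * (\<Sum>j\<in>UNIV. v$j * NN j x)) / (FF x)^2"
    by (simp add: HH_def sum_divide_distrib sum_distrib_left sum_distrib_right sum_subtractf[symmetric]
        sum_product diff_divide_distrib algebra_simps)
  then show ?thesis by (simp add: quad_M lin_N FF_ww power2_eq_square mult.commute)
qed

lemma quad_pos:
  assumes "v \<noteq> 0"
  shows "(\<Sum>j\<in>UNIV. v$j * (\<Sum>i\<in>UNIV. v$i * HH i j x)) > 0"
proof -
  obtain k where k: "v$k \<noteq> 0" using assms by (auto simp: vec_eq_iff)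
  let ?w = "ww x" and ?s = "\<lambda>I. LI I v"
  have s0: "?s 0 = 0" by (simp add: LI_def)
  have sk: "?s (axis k 1) = v$k"
  proof -
    have "(\<lambda>i. real ((axis k 1::nat^'n)$i) * v$i) = (\<lambda>i. if i = k then v$i else 0)"
      by (auto simp: axis_def fun_eq_iff)
    then show ?thesis unfolding LI_def by (simp only:) simp
  qed
  have "(\<Sum>I\<in>II. \<Sum>J\<in>II. ?w I * ?w J * (?s I - ?s J)^2) > 0"
  proof (rule sum_pos2[OF fin zero_in])
    have nn: "0 \<le> ?w I * ?w J * (?s I - ?s J)^2" if "I \<in> II" "J \<in> II" for I J
      using ww_pos[OF that(1), of x] ww_pos[OF that(2), of x] by simp
    show "0 < (\<Sum>J\<in>II. ?w 0 * ?w J * (?s 0 - ?s J)^2)"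
    proof (rule sum_pos2[OF fin axis_in[of k]])
      show "0 < ?w 0 * ?w (axis k 1) * (?s 0 - ?s (axis k 1))^2"
        using ww_pos[OF zero_in, of x] ww_pos[OF axis_in[of k], of x] k s0 sk by simp
      show "\<And>J. J \<in> II \<Longrightarrow> 0 \<le> ?w 0 * ?w J * (?s 0 - ?s J)^2" using nn zero_in by blast
    qed
    show "\<And>I. I \<in> II \<Longrightarrow> 0 \<le> (\<Sum>J\<in>II. ?w I * ?w J * (?s I - ?s J)^2)"
      using nn by (auto intro!: sum_nonneg)
  qed
  then have "0 < 2 * ((\<Sum>I\<in>II. ?w I) * (\<Sum>I\<in>II. ?w I * (?s I)^2) - (\<Sum>I\<in>II. ?w I * ?s I)^2)"
    by (simp only: var_identity)
  then have "(\<Sum>I\<in>II. ?w I) * (\<Sum>I\<in>II. ?w I * (?s I)^2) - (\<Sum>I\<in>II. ?w I * ?s I)^2 > 0"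
    by simp
  then show ?thesis using FF_pos[of x] by (simp add: quad_H)
qed

lemma gg_inj: "inj gg"
proof (rule injI, rule ccontr)
  fix x y assume eq: "gg x = gg y" and ne: "x \<noteq> y"
  define v where "v = y - x"
  have v0: "v \<noteq> 0" using ne by (simp add: v_def)
  define \<phi> where "\<phi> t = (\<Sum>j\<in>UNIV. v$j * GG j (x + t *\<^sub>R v))" for t
  define \<phi>' where "\<phi>' t = (\<Sum>j\<in>UNIV. v$j * (\<Sum>i\<in>UNIV. v$i * HH i j (x + t *\<^sub>R v)))" for t
  have d: "(\<phi> has_real_derivative \<phi>' t) (at t)" for t
  proof -
    have l: "((\<lambda>t. x + t *\<^sub>R v) has_derivative (\<lambda>s. s *\<^sub>R v)) (at t)"
      by (auto intro!: derivative_eq_intros)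
    have "((\<lambda>t. GG j (x + t *\<^sub>R v)) has_derivative (\<lambda>s. \<Sum>i\<in>UNIV. (s *\<^sub>R v)$i * HH i j (x + t *\<^sub>R v))) (at t)" for j
      using has_derivative_compose[OF l GG_deriv] by (simp add: comp_def)
    then have "(\<phi> has_derivative (\<lambda>s. \<Sum>j\<in>UNIV. v$j * (\<Sum>i\<in>UNIV. (s *\<^sub>R v)$i * HH i j (x + t *\<^sub>R v)))) (at t)"
      unfolding \<phi>_def by (intro has_derivative_sum has_derivative_mult_right)
    moreover have "(\<lambda>s. \<Sum>j\<in>UNIV. v$j * (\<Sum>i\<in>UNIV. (s *\<^sub>R v)$i * HH i j (x + t *\<^sub>R v))) = (\<lambda>s. \<phi>' t * s)"
      by (simp add: fun_eq_iff \<phi>'_def sum_distrib_left mult_ac)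
    ultimately show ?thesis by (simp add: has_field_derivative_def)
  qed
  obtain z where "0 < z" "z < 1" "\<phi> 1 - \<phi> 0 = (1 - 0) * \<phi>' z"
    using MVT2[of 0 1 \<phi> \<phi>'] d by auto
  moreover have "\<phi> 1 = \<phi> 0" using eq by (simp add: \<phi>_def v_def gg_def vec_eq_iff)
  moreover have "\<phi>' z > 0" unfolding \<phi>'_def by (rule quad_pos[OF v0])
  ultimately show False by simp
qed

end


lemma support_hull:
  fixes S :: "'a::real_inner set"
  assumes "p \<in> convex hull S"
  shows "\<exists>s\<in>S. s \<bullet> x \<ge> p \<bullet> x"
proof (rule ccontr)
  assume "\<not> ?thesis"
  then have "S \<subseteq> {y. x \<bullet> y < p \<bullet> x}" by (auto simp: inner_commute not_le)
  then have "convex hull S \<subseteq> {y. x \<bullet> y < p \<bullet> x}"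
    by (intro hull_minimal convex_halfspace_lt)
  with assms show False by (auto simp: inner_commute)
qed

context toric begin

definition Ir :: "nat^'n \<Rightarrow> real^'n" where "Ir I = (\<chi> i. real (I$i))"
definition KK :: "(real^'n) set" where "KK = convex hull (Ir ` II)"
definition QQ :: "(real^'n) set" where "QQ = (\<lambda>p. p - 1) ` KK"

lemma LI_inner: "LI I x = Ir I \<bullet> x"
  by (simp add: LI_def Ir_def inner_vec_def)

lemma NN_ww: "NN j x = (\<Sum>I\<in>II. ww x I * real (I$j))"
  by (simp add: NN_def Sc_def ww_def mult_ac)

lemma grad_phi_eq: "(\<chi> j. NN j x / FF x) = (\<Sum>I\<in>II. (ww x I / FF x) *\<^sub>R Ir I)"
  by (simp add: vec_eq_iff NN_ww Ir_def sum_divide_distrib)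

lemma grad_phi_in: "(\<chi> j. NN j x / FF x) \<in> KK"
  unfolding grad_phi_eq KK_def
proof (rule convex_sum[OF fin convex_convex_hull])
  show "(\<Sum>I\<in>II. ww x I / FF x) = 1"
    using FF_pos[of x] by (simp add: FF_ww sum_divide_distrib[symmetric])
  show "\<And>I. I \<in> II \<Longrightarrow> 0 \<le> ww x I / FF x"
    using FF_pos[of x] ww_pos by (simp add: less_imp_le)
  show "\<And>I. I \<in> II \<Longrightarrow> Ir I \<in> convex hull (Ir ` II)"
    by (simp add: hull_inc)
qed

lemma gg_eq: "gg x = (\<chi> j. NN j x / FF x) - 1"
  by (simp add: gg_def GG_def vec_eq_iff)

lemma gg_in_QQ: "gg x \<in> QQ"
  unfolding QQ_def gg_eq using grad_phi_in by blast

lemma KK_compact: "compact KK"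
  unfolding KK_def using fin by (simp add: compact_convex_hull finite_imp_compact)

lemma QQ_compact: "compact QQ"
  unfolding QQ_def by (intro compact_continuous_image KK_compact continuous_intros)

lemma QQ_convex: "convex QQ"
  unfolding QQ_def KK_def by simp

definition amin :: real where "amin = Min (a ` II)"

lemma amin_pos: "amin > 0"
  unfolding amin_def using fin zero_in apos by (subst Min_gr_iff) auto

lemma amin_le: "I \<in> II \<Longrightarrow> amin \<le> a I"
  unfolding amin_def using fin by auto

lemma FF_ge: "I \<in> II \<Longrightarrow> a I * exp (LI I x) \<le> FF x"
proof -
  assume I: "I \<in> II"
  have "ww x I \<le> (\<Sum>J\<in>II. ww x J)"
    using fin I ww_pos by (intro member_le_sum) (auto intro: less_imp_le)
  then show ?thesis by (simp add: FF_ww ww_def)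
qed

lemma coercive:
  assumes eps: "\<epsilon> > 0" and ball: "cball q \<epsilon> \<subseteq> KK"
  shows "ln (FF x) - q \<bullet> x \<ge> ln amin + \<epsilon> * norm x"
proof -
  define p where "p = q + (\<epsilon> / norm x) *\<^sub>R x"
  have "dist q p \<le> \<epsilon>"
    using eps by (cases "x = 0") (auto simp: p_def dist_norm)
  then have "p \<in> KK" using ball by auto
  then obtain I where I: "I \<in> II" "Ir I \<bullet> x \<ge> p \<bullet> x"
    using support_hull[of p "Ir ` II" x] unfolding KK_def by auto
  have px: "p \<bullet> x = q \<bullet> x + \<epsilon> * norm x"
    by (cases "x = 0") (auto simp: p_def inner_add_left power2_norm_eq_inner[symmetric] power2_eq_square)
  have "amin * exp (LI I x) \<le> FF x"
    using FF_ge[OF I(1), of x] amin_le[OF I(1)] by (meson exp_gt_zero less_imp_le mult_right_mono order_trans)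
  then have "ln (amin * exp (LI I x)) \<le> ln (FF x)"
    using amin_pos FF_pos[of x] by (subst ln_le_cancel_iff) auto
  then have "ln amin + LI I x \<le> ln (FF x)" using amin_pos by (simp add: ln_mult)
  then show ?thesis using I(2) px by (simp add: LI_inner)
qed

lemma lnFF_deriv: "((\<lambda>x. ln (FF x)) has_derivative (\<lambda>h. (\<Sum>i\<in>UNIV. h$i * NN i x) / FF x)) (at x)"
  using has_derivative_compose[OF FF_deriv DERIV_ln_divide[OF FF_pos[of x], THEN has_field_derivative_imp_has_derivative]]
  by (simp add: comp_def)

lemma attain:
  assumes eps: "\<epsilon> > 0" and ball: "cball q \<epsilon> \<subseteq> KK"
  shows "\<exists>x. (\<chi> j. NN j x / FF x) = q"
proof -
  define \<psi> where "\<psi> x = ln (FF x) - q \<bullet> x" for x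
  have d: "(\<psi> has_derivative (\<lambda>h. (\<Sum>i\<in>UNIV. h$i * NN i x) / FF x - q \<bullet> h)) (at x)" for x
    unfolding \<psi>_def
    by (intro has_derivative_diff lnFF_deriv bounded_linear_imp_has_derivative bounded_linear_inner_right)
  have cont: "continuous_on UNIV \<psi>"
    using d has_derivative_continuous by (blast intro: continuous_at_imp_continuous_on)
  define r where "r = max 0 ((\<psi> 0 - ln amin) / \<epsilon>) + 1"
  have r0: "r > 0" by (simp add: r_def add_pos_nonneg)
  obtain x0 where x0: "x0 \<in> cball 0 r" "\<forall>y\<in>cball 0 r. \<psi> x0 \<le> \<psi> y"
    using continuous_attains_inf[of "cball 0 r" \<psi>] r0 continuous_on_subset[OF cont] by auto
  have glob: "\<psi> x0 \<le> \<psi> y" for y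
  proof (cases "norm y \<le> r")
    case True then show ?thesis using x0 by auto
  next
    case False
    have "\<psi> y \<ge> ln amin + \<epsilon> * norm y" using coercive[OF eps ball, of y] by (simp add: \<psi>_def)
    moreover have "\<epsilon> * norm y > \<epsilon> * r" using False eps by simp
    moreover have "\<epsilon> * r \<ge> \<psi> 0 - ln amin"
    proof -
      have "r \<ge> (\<psi> 0 - ln amin) / \<epsilon>" by (simp add: r_def)
      then show ?thesis using eps by (simp add: field_simps)
    qed
    moreover have "\<psi> x0 \<le> \<psi> 0" using x0 r0 by auto
    ultimately show ?thesis by linarith
  qed
  have "(\<lambda>h. (\<Sum>i\<in>UNIV. h$i * NN i x0) / FF x0 - q \<bullet> h) = (\<lambda>h. 0)"
    by (rule has_derivative_local_min[OF d]) (simp add: glob)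
  then have "(\<Sum>i\<in>UNIV. (axis j 1 :: real^'n)$i * NN i x0) / FF x0 - q \<bullet> axis j 1 = 0" for j
    by (rule fun_cong[where x="axis j 1", THEN trans]) simp
  then have h: "NN j x0 / FF x0 - q \<bullet> axis j 1 = 0" for j
    by (simp only: sum_axis_mult)
  have "NN j x0 / FF x0 = q $ j" for j
    using h[of j] by (simp add: cart_eq_inner_axis)
  then show ?thesis by (auto simp: vec_eq_iff)
qed

lemma interior_QQ: "interior QQ \<subseteq> range gg"
proof
  fix p assume "p \<in> interior QQ"
  then obtain \<epsilon> where eps: "\<epsilon> > 0" "cball p \<epsilon> \<subseteq> QQ" by (auto simp: mem_interior_cball)
  have "cball (p + 1) \<epsilon> \<subseteq> KK"
  proof
    fix y assume "y \<in> cball (p + 1) \<epsilon>"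
    then have "y - 1 \<in> cball p \<epsilon>" by (simp add: dist_norm algebra_simps)
    then have "y - 1 \<in> QQ" using eps by auto
    then obtain k where "k \<in> KK" "y - 1 = k - 1" by (auto simp: QQ_def)
    then show "y \<in> KK" by simp
  qed
  then obtain x where "(\<chi> j. NN j x / FF x) = p + 1" using attain eps by blast
  then have "gg x = p" by (simp add: gg_eq)
  then show "p \<in> range gg" by auto
qed

end


lemma abs_int_UNIV_lborel:
  fixes f :: "'a::euclidean_space \<Rightarrow> 'b::euclidean_space"
  assumes [measurable]: "f \<in> borel_measurable borel"
  shows "f absolutely_integrable_on UNIV \<longleftrightarrow> integrable lborel f"
    and "integrable lborel f \<Longrightarrow> integral UNIV f = integral\<^sup>L lborel f"
proof -
  show 1: "f absolutely_integrable_on UNIV \<longleftrightarrow> integrable lborel f"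
    unfolding set_integrable_def by (simp add: integrable_completion)
  assume "integrable lborel f"
  then have ai: "f absolutely_integrable_on UNIV" using 1 by simp
  have "integral UNIV f = (LINT x:UNIV | lebesgue. f x)" using set_lebesgue_integral_eq_integral(2)[OF ai] by simp
  also have "\<dots> = integral\<^sup>L lborel f" unfolding set_lebesgue_integral_def by (simp add: integral_completion)
  finally show "integral UNIV f = integral\<^sup>L lborel f" .
qed

lemma translate_UNIV:
  fixes f :: "'a::euclidean_space \<Rightarrow> real"
  assumes m[measurable]: "f \<in> borel_measurable borel" and ai: "f absolutely_integrable_on UNIV"
  shows "(\<lambda>x. f (x + c)) absolutely_integrable_on UNIV" "integral UNIV (\<lambda>x. f (x + c)) = integral UNIV f"
proof -
  have m2[measurable]: "(\<lambda>x. f (x + c)) \<in> borel_measurable borel" by measurable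
  have i: "integrable lborel f" using ai abs_int_UNIV_lborel(1)[OF m] by simp
  have "integrable lborel f \<longleftrightarrow> integrable (distr lborel borel ((+) c)) f" by (simp add: lborel_distr_plus)
  also have "\<dots> \<longleftrightarrow> integrable lborel (\<lambda>x. f (c + x))" by (rule integrable_distr_eq) auto
  finally have i2: "integrable lborel (\<lambda>x. f (x + c))" using i by (simp add: add.commute)
  then show "(\<lambda>x. f (x + c)) absolutely_integrable_on UNIV" using abs_int_UNIV_lborel(1)[OF m2] by simp
  have "integral\<^sup>L lborel f = integral\<^sup>L (distr lborel borel ((+) c)) f" by (simp add: lborel_distr_plus)
  also have "\<dots> = integral\<^sup>L lborel (\<lambda>x. f (c + x))" by (rule integral_distr) auto
  finally show "integral UNIV (\<lambda>x. f (x + c)) = integral UNIV f"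
    using abs_int_UNIV_lborel(2)[OF m2 i2] abs_int_UNIV_lborel(2)[OF m i] by (simp add: add.commute)
qed

context toric begin

lemma uu_cont: "continuous_on UNIV uu"
  using uu_deriv has_derivative_continuous by (blast intro: continuous_at_imp_continuous_on)

lemma gg_cont: "continuous_on UNIV gg"
  using gg_deriv has_derivative_continuous by (blast intro: continuous_at_imp_continuous_on)

lemma E_eq: "exp (- uu x) = exp (\<Sum>i\<in>UNIV. x$i) / FF x"
  using FF_pos[of x] by (simp add: uu_def exp_diff)

lemma FF_shift_mono:
  assumes "s \<ge> 0" shows "FF x \<le> FF (x + s *\<^sub>R axis k 1)"
  unfolding FF_def Sc_def
proof (rule sum_mono)
  fix I assume "I \<in> II"
  have "LI I x \<le> LI I (x + s *\<^sub>R axis k 1)"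
    using assms by (simp add: LI_inner inner_add_right inner_axis Ir_def)
  then show "a I * 1 * exp (LI I x) \<le> a I * 1 * exp (LI I (x + s *\<^sub>R axis k 1))"
    using apos[OF \<open>I \<in> II\<close>] by simp
qed

lemma E_shift:
  assumes "s \<ge> 0" shows "exp (- uu (x + s *\<^sub>R axis k 1)) \<le> exp s * exp (- uu x)"
proof -
  have "(\<Sum>i\<in>UNIV. (x + s *\<^sub>R axis k 1)$i) = (\<Sum>i\<in>UNIV. x$i) + s"
  proof -
    have "(\<Sum>i\<in>UNIV. (s *\<^sub>R axis k 1 :: real^'n)$i) = (\<Sum>i\<in>UNIV. (axis k 1 :: real^'n)$i * s)"
      by (simp add: mult.commute)
    also have "\<dots> = s" by (rule sum_axis_mult)
    finally show ?thesis by (simp add: sum.distrib)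
  qed
  then have "exp (- uu (x + s *\<^sub>R axis k 1)) = exp s * exp (\<Sum>i\<in>UNIV. x$i) / FF (x + s *\<^sub>R axis k 1)"
    by (simp add: E_eq exp_add mult.commute)
  also have "\<dots> \<le> exp s * exp (\<Sum>i\<in>UNIV. x$i) / FF x"
    using FF_shift_mono[OF assms, of x k] FF_pos[of x] by (intro divide_left_mono) auto
  finally show ?thesis by (simp add: E_eq)
qed

lemma GG_bound: "\<exists>B. \<forall>x. \<bar>GG k x\<bar> \<le> B"
proof -
  obtain B where B: "\<forall>p\<in>QQ. norm p \<le> B" using compact_imp_bounded[OF QQ_compact] by (auto simp: bounded_iff)
  have "\<bar>GG k x\<bar> \<le> B" for x
    using component_le_norm_cart[of "gg x" k] B gg_in_QQ[of x] by (auto simp: gg_def)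
  then show ?thesis by blast
qed

lemma line_deriv:
  "((\<lambda>t. exp (- uu (x + t *\<^sub>R axis k 1))) has_real_derivative
     (- exp (- uu (x + t *\<^sub>R axis k 1)) * GG k (x + t *\<^sub>R axis k 1))) (at t)"
proof -
  let ?y = "x + t *\<^sub>R axis k 1"
  have l: "((\<lambda>t. x + t *\<^sub>R axis k 1) has_derivative (\<lambda>s. s *\<^sub>R axis k 1)) (at t)"
    by (auto intro!: derivative_eq_intros)
  have "((\<lambda>t. uu (x + t *\<^sub>R axis k 1)) has_derivative (\<lambda>s. \<Sum>i\<in>UNIV. (s *\<^sub>R axis k 1)$i * GG i ?y)) (at t)"
    using has_derivative_compose[OF l uu_deriv] by (simp add: comp_def)
  moreover have "(\<lambda>s. \<Sum>i\<in>UNIV. (s *\<^sub>R axis k 1)$i * GG i ?y) = (\<lambda>s. GG k ?y * s)"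
  proof
    fix s
    have "(\<Sum>i\<in>UNIV. (s *\<^sub>R axis k 1)$i * GG i ?y) = (\<Sum>i\<in>UNIV. (axis k 1 :: real^'n)$i * (s * GG i ?y))"
      by (simp add: mult_ac)
    also have "\<dots> = s * GG k ?y" by (rule sum_axis_mult)
    finally show "(\<Sum>i\<in>UNIV. (s *\<^sub>R axis k 1)$i * GG i ?y) = GG k ?y * s" by simp
  qed
  ultimately have "((\<lambda>t. uu (x + t *\<^sub>R axis k 1)) has_real_derivative GG k ?y) (at t)"
    by (simp add: has_field_derivative_def)
  then show ?thesis
    by (auto intro!: derivative_eq_intros)
qed

lemma flux_zero:
  assumes Eint: "(\<lambda>x. exp (- uu x)) absolutely_integrable_on UNIV"
  shows "(\<lambda>x. exp (- uu x) * GG k x) integrable_on UNIV"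
    and "integral UNIV (\<lambda>x. exp (- uu x) * GG k x) = 0"
proof -
  define E where "E x = exp (- uu x)" for x
  define e :: "real^'n" where "e = axis k 1"
  define t where "t m = inverse (real (Suc m))" for m :: nat
  define f where "f m x = inverse (t m) *\<^sub>R (E (x + t m *\<^sub>R e) - E x)" for m x
  define g where "g x = - E x * GG k x" for x
  obtain B where B: "\<And>x. \<bar>GG k x\<bar> \<le> B" using GG_bound[of k] by blast
  have B0: "B \<ge> 0" using B[of 0] by linarith
  have Econt: "continuous_on UNIV E" unfolding E_def by (intro continuous_intros uu_cont)
  have Em: "E \<in> borel_measurable borel" by (rule borel_measurable_continuous_onI[OF Econt])
  have Eai: "E absolutely_integrable_on UNIV" using Eint by (simp add: E_def[abs_def])
  have Ei: "E integrable_on UNIV" using set_lebesgue_integral_eq_integral(1)[OF Eai] .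
  have t0: "0 < t m" "t m \<le> 1" for m by (auto simp: t_def field_simps)
  have fi: "f m integrable_on UNIV" for m
  proof -
    have "(\<lambda>x. E (x + t m *\<^sub>R e)) integrable_on UNIV"
      using set_lebesgue_integral_eq_integral(1)[OF translate_UNIV(1)[OF Em Eai]] .
    then show ?thesis unfolding f_def by (intro integrable_cmul integrable_diff Ei)
  qed
  have fint: "integral UNIV (f m) = 0" for m
  proof -
    have "(\<lambda>x. E (x + t m *\<^sub>R e)) integrable_on UNIV"
      using set_lebesgue_integral_eq_integral(1)[OF translate_UNIV(1)[OF Em Eai]] .
    then show ?thesis unfolding f_def
      by (simp add: integral_diff[OF _ Ei] translate_UNIV(2)[OF Em Eai])
  qed
  have der: "((\<lambda>s. E (x + s *\<^sub>R e)) has_real_derivative (- E (x + s *\<^sub>R e) * GG k (x + s *\<^sub>R e))) (at s)" for x s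
    unfolding E_def e_def by (rule line_deriv)
  have hi: "(\<lambda>x. (exp 1 * B) * E x) integrable_on UNIV"
    using integrable_on_cmult_left[OF Ei, of "exp 1 * B"] by simp
  have le: "norm (f m x) \<le> (exp 1 * B) * E x" for m x
  proof -
    obtain z where z: "0 < z" "z < t m"
      "E (x + t m *\<^sub>R e) - E (x + 0 *\<^sub>R e) = (t m - 0) * (- E (x + z *\<^sub>R e) * GG k (x + z *\<^sub>R e))"
      using MVT2[of 0 "t m" "\<lambda>s. E (x + s *\<^sub>R e)" "\<lambda>s. - E (x + s *\<^sub>R e) * GG k (x + s *\<^sub>R e)"] t0[of m] der
      by blast
    have "f m x = - E (x + z *\<^sub>R e) * GG k (x + z *\<^sub>R e)"
      using z(3) t0[of m] by (simp add: f_def field_simps)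
    then have "norm (f m x) = E (x + z *\<^sub>R e) * \<bar>GG k (x + z *\<^sub>R e)\<bar>"
      by (simp add: E_def abs_mult)
    also have "\<dots> \<le> (exp z * E x) * B"
      using E_shift[of z x k] z B[of "x + z *\<^sub>R e"] B0
      by (intro mult_mono) (auto simp: E_def e_def)
    also have "\<dots> \<le> (exp 1 * E x) * B"
      using z t0[of m] B0 by (intro mult_right_mono mult_right_mono) (auto simp: E_def)
    finally show ?thesis by (simp add: mult_ac)
  qed
  have conv: "(\<lambda>m. f m x) \<longlonglongrightarrow> g x" for x
  proof -
    have "((\<lambda>h. (E (x + (0 + h) *\<^sub>R e) - E (x + 0 *\<^sub>R e)) / h) \<longlongrightarrow> (- E (x + 0 *\<^sub>R e) * GG k (x + 0 *\<^sub>R e))) (at 0)"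
      using der[of x 0] unfolding DERIV_def by simp
    then have lim: "((\<lambda>h. (E (x + h *\<^sub>R e) - E x) / h) \<longlongrightarrow> g x) (at 0)"
      by (simp add: g_def)
    have tl: "filterlim t (at 0) sequentially"
    proof (subst filterlim_at, intro conjI)
      show "\<forall>\<^sub>F m in sequentially. t m \<in> UNIV \<and> t m \<noteq> 0" using t0 by (auto intro!: always_eventually) (metis less_irrefl)
      show "t \<longlonglongrightarrow> 0" unfolding t_def by (rule LIMSEQ_inverse_real_of_nat)
    qed
    have "(\<lambda>m. (E (x + t m *\<^sub>R e) - E x) / t m) \<longlonglongrightarrow> g x"
      using filterlim_compose[OF lim tl] .
    then show ?thesis by (simp add: f_def divide_inverse mult.commute)
  qed
  have dc: "g integrable_on UNIV" "(\<lambda>m. integral UNIV (f m)) \<longlonglongrightarrow> integral UNIV g"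
    using dominated_convergence[of f UNIV "\<lambda>x. (exp 1 * B) * E x" g, OF fi hi le conv] by auto
  have "integral UNIV g = 0"
    using dc(2) unfolding fint using LIMSEQ_unique tendsto_const by blast
  moreover have gE: "g = (\<lambda>x. - (exp (- uu x) * GG k x))" by (simp add: g_def E_def fun_eq_iff)
  ultimately show "integral UNIV (\<lambda>x. exp (- uu x) * GG k x) = 0"
    by simp
  show "(\<lambda>x. exp (- uu x) * GG k x) integrable_on UNIV"
    using integrable_neg[OF dc(1)] gE by simp
qed

end

theorem lemma6:
  fixes \<I> :: "(nat^'n) set" and a :: "nat^'n \<Rightarrow> real" and u :: "real^'n \<Rightarrow> real"
  assumes "finite \<I>"
    and "{I. (\<Sum>i\<in>UNIV. I $ i) \<le> 1} \<subseteq> \<I>"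
    and "\<And>I. I \<in> \<I> \<Longrightarrow> a I > 0"
    and "\<And>I. (\<Sum>i\<in>UNIV. I $ i) \<le> 1 \<Longrightarrow> a I = 1"
    and "\<And>x. u x = ln (\<Sum>I\<in>\<I>. a I * exp (\<Sum>i\<in>UNIV. real (I $ i) * x $ i))
                     - (\<Sum>i\<in>UNIV. x $ i)"
    and "\<And>x. det (hessian u x) = exp (- u x)"
  shows "measure lebesgue (closure (range (grad u))) > 0
         \<and> (\<lambda>y. y) integrable_on closure (range (grad u))
         \<and> barycenter (closure (range (grad u))) = 0"
proof -
  interpret T: toric \<I> a
    using assms(1-4) by unfold_locales auto
  have uu: "u = T.uu"
    by (simp add: fun_eq_iff assms(5) T.uu_def T.FF_def T.Sc_def T.LI_def)
  have gu: "grad u = T.gg" by (simp add: uu T.grad_uu)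
  define g' where "g' x = (\<lambda>h. \<chi> j. \<Sum>i\<in>UNIV. h$i * T.HH i j x)" for x
  have der: "\<And>x. (T.gg has_derivative g' x) (at x)" unfolding g'_def by (rule T.gg_deriv)
  have detg: "det (matrix (g' x)) = exp (- T.uu x)" for x
    using assms(6)[of x] unfolding g'_def T.matrix_gg' uu .
  define R where "R = range T.gg"
  have contJ: "continuous_on UNIV (\<lambda>x. det (matrix (g' x)))"
    unfolding detg by (intro continuous_intros T.uu_cont)
  have Ropen: "open R" unfolding R_def
    by (rule invariance_of_domain[OF T.gg_cont open_UNIV]) (simp add: T.gg_inj)
  have RQ: "R \<subseteq> T.QQ" using T.gg_in_QQ by (auto simp: R_def)
  have Rb: "bounded R" using RQ compact_imp_bounded[OF T.QQ_compact] bounded_subset by blast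
  have Rl: "R \<in> sets lebesgue" using Ropen by simp
  obtain bl bu where box: "closure R \<subseteq> cbox bl bu"
    using bounded_subset_cbox_symmetric[OF bounded_closure[OF Rb]] by blast
  have Rbox: "R \<subseteq> cbox bl bu" using box closure_subset by blast
  have fin: "finite (UNIV::'n set)" "finite (UNIV::'n bit0 set)" by simp_all
  have "CARD('n) \<le> CARD('n bit0)" by simp
  then obtain e :: "'n \<Rightarrow> 'n bit0" where e: "inj e"
    using card_le_inj[OF fin] by blast
  note cov = CoV_n[OF e der T.gg_inj contJ T.gg_cont]
  have c1: "(\<lambda>y::real^'n. 1::real^'n) absolutely_integrable_on R"
    using set_integrable_subset[OF absolutely_integrable_continuous[of bl bu "\<lambda>y::real^'n. 1::real^'n"] Rl Rbox]
    by simp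
  have "(\<lambda>x. \<bar>det (matrix (g' x))\<bar> *\<^sub>R (1::real^'n)) absolutely_integrable_on UNIV"
    using cov[of "\<lambda>y. 1" "integral R (\<lambda>y. 1)"] c1 Ropen continuous_on_const unfolding R_def by blast
  then have "(\<lambda>x. (\<bar>det (matrix (g' x))\<bar> *\<^sub>R (1::real^'n)) \<bullet> axis (undefined::'n) 1) absolutely_integrable_on UNIV"
    by (rule absolutely_integrable_component)
  then have Eint: "(\<lambda>x. exp (- T.uu x)) absolutely_integrable_on UNIV"
    by (simp add: detg inner_axis)
  have c2: "(\<lambda>y::real^'n. y) absolutely_integrable_on R"
    using set_integrable_subset[OF absolutely_integrable_continuous[of bl bu "\<lambda>y::real^'n. y"] Rl Rbox]
    by simp
  have I1both: "integral UNIV (\<lambda>x. \<bar>det (matrix (g' x))\<bar> *\<^sub>R T.gg x) = integral R (\<lambda>y. y)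
     \<and> (\<lambda>x. \<bar>det (matrix (g' x))\<bar> *\<^sub>R T.gg x) absolutely_integrable_on UNIV"
    using cov[of "\<lambda>y. y" "integral R (\<lambda>y. y)"] c2 Ropen continuous_on_id unfolding R_def by blast
  then have I1: "integral UNIV (\<lambda>x. \<bar>det (matrix (g' x))\<bar> *\<^sub>R T.gg x) = integral R (\<lambda>y. y)"
   and I1i: "(\<lambda>x. \<bar>det (matrix (g' x))\<bar> *\<^sub>R T.gg x) absolutely_integrable_on UNIV" by auto
  have zero: "integral R (\<lambda>y. y) = 0"
  proof -
    have int: "(\<lambda>x. \<bar>det (matrix (g' x))\<bar> *\<^sub>R T.gg x) integrable_on UNIV"
      using set_lebesgue_integral_eq_integral(1)[OF I1i] .
    have "integral UNIV (\<lambda>x. \<bar>det (matrix (g' x))\<bar> *\<^sub>R T.gg x) $ k = 0" for k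
    proof -
      have "integral UNIV (\<lambda>x. \<bar>det (matrix (g' x))\<bar> *\<^sub>R T.gg x) $ k
          = integral UNIV (\<lambda>x. (\<bar>det (matrix (g' x))\<bar> *\<^sub>R T.gg x) $ k)"
        using integral_component_eq_cart[OF int] by simp
      also have "\<dots> = integral UNIV (\<lambda>x. exp (- T.uu x) * T.GG k x)"
        by (simp add: detg T.gg_def)
      also have "\<dots> = 0" by (rule T.flux_zero(2)[OF Eint])
      finally show ?thesis .
    qed
    then show ?thesis using I1 by (simp add: vec_eq_iff)
  qed
  have cl: "closure R \<subseteq> T.QQ"
    using closure_minimal[OF RQ compact_imp_closed[OF T.QQ_compact]] .
  have neg: "negligible (closure R - R)"
  proof (rule negligible_subset[OF negligible_convex_frontier[OF T.QQ_convex]])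
    show "closure R - R \<subseteq> frontier T.QQ"
      using cl T.interior_QQ closure_subset[of T.QQ] by (auto simp: frontier_def R_def)
  qed
  have neg1: "negligible {x \<in> closure R - R. x \<noteq> 0}" by (rule negligible_subset[OF neg]) auto
  have neg2: "negligible {x \<in> R - closure R. x \<noteq> (0::real^'n)}"
  proof -
    have "{x \<in> R - closure R. x \<noteq> (0::real^'n)} = {}" using closure_subset[of R] by blast
    then show ?thesis using negligible_empty by metis
  qed
  have intR: "(\<lambda>y::real^'n. y) integrable_on R" using set_lebesgue_integral_eq_integral(1)[OF c2] .
  have intcl: "(\<lambda>y::real^'n. y) integrable_on closure R"
    by (rule integrable_spike_set[OF intR neg2 neg1])
  have icl: "integral (closure R) (\<lambda>y::real^'n. y) = 0"
    using integral_spike_set[OF neg1 neg2] zero by simp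
  obtain p where "p \<in> R" unfolding R_def by blast
  then obtain r where r: "r > 0" "ball p r \<subseteq> R" using Ropen open_contains_ball by blast
  have "measure lebesgue (ball p r) \<le> measure lebesgue (closure R)"
    using r closure_subset[of R]
    by (intro measure_mono_fmeasurable) (auto intro: lmeasurable_compact compact_closure[THEN iffD2, OF Rb])
  moreover have "measure lebesgue (ball p r) > 0"
    using content_ball_pos[OF r(1), of p] by (simp add: measure_completion)
  ultimately have mpos: "measure lebesgue (closure R) > 0" by linarith
  show ?thesis
    using mpos intcl icl unfolding gu R_def[symmetric] barycenter_def by simp
qed

end
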